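(* Let $\lambda=\langle1^{m_1},2^{m_2},\dots,k^{m_k}\rangle$ with all $m_i>0$, $n\ge1$, $x_1,\dots,x_n>0$, $t>0$. For $1\le j\le k$ let $M_j=m_j+\dots+m_k$ and $M_{k+1}=0$. Under the stationary distribution of the mTAZRP of type $\lambda$ on $n$ sites, the expected number of particles of species $j$ at site $1$ is $$\langle\tau^{(j)}_1\rangle=x_1\frac{\partial}{\partial x_1}\log\left(\frac{\widetilde H_{\langle1^{M_j}\rangle}(x_1,\dots,x_n;1,t)}{\widetilde H_{\langle1^{M_{j+1}}\rangle}(x_1,\dots,x_n;1,t)}\right),$$ with $\widetilde H_{\langle1^0\rangle}:=1$.
   Context: mTAZRP: for a partition $\lambda$ and $n\ge1$, sites $1,\dots,n$ on a ring (site $n+1$ is site $1$); a configuration assigns to each site a multiset of species with union the multiset of parts of $\lambda$; if site $j$ has $c$ particles of species $r$ and $d$ of species larger than $r$, a particle of species $r$ jumps from $j$ to $j+1$ at rate $x_j^{-1}t^d(1+t+\dots+t^{c-1})$. $\langle1^{m_1},\dots,k^{m_k}\rangle$ denotes the partition with part $i$ occurring $m_i$ times. Notation: $[a]_t=1+t+\dots+t^{a-1}$, $[a]_t!=\prod_{b\le a}[b]_t$, $\begin{bmatrix}m\\ \eta_1,\dots,\eta_n\end{bmatrix}_t=[m]_t!/\prod_i[\eta_i]_t!$, and $\widetilde H_{\langle1^m\rangle}(x_1,\dots,x_n;1,t)=\sum_{\eta_1+\dots+\eta_n=m,\ \eta_i\ge0}\begin{bmatrix}m\\ \eta_1,\dots,\eta_n\end{bmatrix}_t\prod_i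 x_i^{\eta_i}$. *)

theory Defs
  imports "HOL-Analysis.Analysis"
begin

definition qint :: "nat \<Rightarrow> real \<Rightarrow> real" where
  "qint a t = (\<Sum>i<a. t ^ i)"

definition qfact :: "nat \<Rightarrow> real \<Rightarrow> real" where
  "qfact a t = (\<Prod>b=1..a. qint b t)"

definition qmultinom :: "nat \<Rightarrow> nat \<Rightarrow> (nat \<Rightarrow> nat) \<Rightarrow> real \<Rightarrow> real" where
  "qmultinom n m \<eta> t = qfact m t / (\<Prod>i=1..n. qfact (\<eta> i) t)"

definition compositions :: "nat \<Rightarrow> nat \<Rightarrow> (nat \<Rightarrow> nat) set" where
  "compositions n m = {\<eta> \<in> {1..n} \<rightarrow>\<^sub>E {..m}. (\<Sum>i=1..n. \<eta> i) = m}"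

text \<open>The modified Macdonald polynomial \<open>H~_{<1^m>}(x_1..x_n;1,t)\<close>\<close>
definition Htilde :: "nat \<Rightarrow> nat \<Rightarrow> (nat \<Rightarrow> real) \<Rightarrow> real \<Rightarrow> real" where
  "Htilde n m x t = (\<Sum>\<eta>\<in>compositions n m. qmultinom n m \<eta> t * (\<Prod>i=1..n. x i ^ \<eta> i))"

text \<open>Configurations: c (j,r) = number of particles of species r at site j,
  sites 1..n, species 1..k, species r occurring m r times in total.\<close>
definition configs :: "nat \<Rightarrow> nat \<Rightarrow> (nat \<Rightarrow> nat) \<Rightarrow> (nat \<times> nat \<Rightarrow> nat) set" where
  "configs n k m = {c \<in> ({1..n} \<times> {1..k}) \<rightarrow>\<^sub>E UNIV.
      \<forall>r\<in>{1..k}. (\<Sum>j=1..n. c (j, r)) = m r}"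

definition next_site :: "nat \<Rightarrow> nat \<Rightarrow> nat" where
  "next_site n j = (if j = n then 1 else j + 1)"

definition move :: "nat \<Rightarrow> (nat \<times> nat \<Rightarrow> nat) \<Rightarrow> nat \<Rightarrow> nat \<Rightarrow> (nat \<times> nat \<Rightarrow> nat)" where
  "move n c j r = (c((j, r) := c (j, r) - 1))((next_site n j, r) := (c((j, r) := c (j, r) - 1)) (next_site n j, r) + 1)"

definition jump_rate :: "nat \<Rightarrow> (nat \<Rightarrow> real) \<Rightarrow> real \<Rightarrow> (nat \<times> nat \<Rightarrow> nat) \<Rightarrow> nat \<Rightarrow> nat \<Rightarrow> real" where
  "jump_rate k x t c j r = inverse (x j) * t ^ (\<Sum>s\<in>{r<..k}. c (j, s)) * qint (c (j, r)) t"

definition trans_rate :: "nat \<Rightarrow> nat \<Rightarrow> (nat \<Rightarrow> real) \<Rightarrow> real \<Rightarrow> (nat \<times> nat \<Rightarrow> nat) \<Rightarrow> (nat \<times> nat \<Rightarrow> nat) \<Rightarrow> real" where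
  "trans_rate n k x t c c' =
     (\<Sum>(j, r)\<in>{(j, r) \<in> {1..n} \<times> {1..k}. c (j, r) > 0 \<and> move n c j r = c'}. jump_rate k x t c j r)"

definition stationary :: "nat \<Rightarrow> nat \<Rightarrow> (nat \<Rightarrow> nat) \<Rightarrow> (nat \<Rightarrow> real) \<Rightarrow> real
    \<Rightarrow> ((nat \<times> nat \<Rightarrow> nat) \<Rightarrow> real) \<Rightarrow> bool" where
  "stationary n k m x t \<pi> \<longleftrightarrow>
     (\<forall>c\<in>configs n k m. \<pi> c \<ge> 0) \<and>
     (\<Sum>c\<in>configs n k m. \<pi> c) = 1 \<and>
     (\<forall>c\<in>configs n k m.
        (\<Sum>c'\<in>configs n k m - {c}. \<pi> c' * trans_rate n k x t c' c)
        = \<pi> c * (\<Sum>c'\<in>configs n k m - {c}. trans_rate n k x t c c'))"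

end

theory Submission
  imports Defs
begin



lemma qint_0[simp]: "qint 0 t = 0" by (simp add: qint_def)
lemma qint_Suc: "qint (Suc a) t = qint a t + t ^ a" by (simp add: qint_def)
lemma qint_add: "qint (a + b) t = qint a t + t ^ a * qint b t"
  by (induction b) (auto simp: qint_Suc algebra_simps power_add)
lemma qint_pos: "t > 0 \<Longrightarrow> a > 0 \<Longrightarrow> qint a t > 0"
  unfolding qint_def by (rule sum_pos) auto
lemma qint_nonneg: "t > 0 \<Longrightarrow> qint a t \<ge> 0"
  unfolding qint_def by (rule sum_nonneg) auto
lemma qfact_Suc: "qfact (Suc a) t = qfact a t * qint (Suc a) t"
  by (simp add: qfact_def)
lemma qfact_pos: "t > 0 \<Longrightarrow> qfact a t > 0"
  unfolding qfact_def by (rule prod_pos) (auto intro: qint_pos)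

definition mv1 :: "('a \<Rightarrow> nat) \<Rightarrow> 'a \<Rightarrow> 'a \<Rightarrow> 'a \<Rightarrow> nat" where
  "mv1 f a b = (f(a := f a - 1))(b := (f(a := f a - 1)) b + 1)"

lemma move_mv1: "move n c j r = mv1 c (j, r) (next_site n j, r)"
  by (simp add: move_def mv1_def)

lemma mv1_apply: "mv1 f a b y = (if y = b then (if a = b then f a - 1 else f b) + 1 else if y = a then f a - 1 else f y)"
  by (simp add: mv1_def)

lemma mv1_same: "f a > 0 \<Longrightarrow> mv1 f a a = f"
  by (rule ext) (simp add: mv1_apply)

lemma mv1_inv: "f a > 0 \<Longrightarrow> mv1 (mv1 f a b) b a = f"
  by (rule ext) (auto simp: mv1_apply)

lemma mv1_pos: "f a > 0 \<Longrightarrow> mv1 f a b b > 0"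
  by (simp add: mv1_apply)

lemma sum_upd: "finite S \<Longrightarrow> a \<in> S \<Longrightarrow> sum (f(a := v)) S + f a = sum f S + (v::nat)"
  by (simp add: sum.remove)

lemma sum_mv1: "finite S \<Longrightarrow> a \<in> S \<Longrightarrow> b \<in> S \<Longrightarrow> f a > 0 \<Longrightarrow> sum (mv1 f a b) S = sum f S"
proof (cases "a = b")
  case True
  assume "f a > 0" then show ?thesis using True by (simp add: mv1_same)
next
  case False
  assume fin: "finite S" and ab: "a \<in> S" "b \<in> S" and pos: "f a > 0"
  have "sum (mv1 f a b) S + (f(a := f a - 1)) b = sum (f(a := f a - 1)) S + ((f(a := f a - 1)) b + 1)"
    unfolding mv1_def using sum_upd[OF fin ab(2)] by metis
  moreover have "sum (f(a := f a - 1)) S + f a = sum f S + (f a - 1)"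
    using sum_upd[OF fin ab(1)] by metis
  ultimately show ?thesis using False pos by simp
qed

lemma next_site_in: "i \<in> {1..n} \<Longrightarrow> next_site n i \<in> {1..n}"
  by (auto simp: next_site_def)

definition prev_site :: "nat \<Rightarrow> nat \<Rightarrow> nat" where
  "prev_site n j = (if j = 1 then n else j - 1)"

lemma next_bij: "bij_betw (next_site n) {1..n} {1..n}"
  by (rule bij_betw_byWitness[where f'="prev_site n"])
     (auto simp: next_site_def prev_site_def)




lemma configs_finite: "finite (configs n k m)"
proof (rule finite_subset)
  show "configs n k m \<subseteq> PiE ({1..n} \<times> {1..k}) (\<lambda>_. {..(\<Sum>r=1..k. m r)})"
  proof
    fix c assume c: "c \<in> configs n k m"
    have "c p \<le> (\<Sum>r=1..k. m r)" if p: "p \<in> {1..n} \<times> {1..k}" for p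
    proof -
      obtain i r where pr: "p = (i, r)" "i \<in> {1..n}" "r \<in> {1..k}" using p by auto
      have "c (i, r) \<le> (\<Sum>j=1..n. c (j, r))"
        using pr by (intro member_le_sum) auto
      also have "\<dots> = m r" using c pr unfolding configs_def by auto
      also have "\<dots> \<le> (\<Sum>r=1..k. m r)" using pr by (intro member_le_sum) auto
      finally show ?thesis using pr by simp
    qed
    then show "c \<in> PiE ({1..n} \<times> {1..k}) (\<lambda>_. {..(\<Sum>r=1..k. m r)})"
      using c unfolding configs_def by (auto simp: PiE_iff)
  qed
qed (auto intro!: finite_PiE)

lemma mv1_ext: "f \<in> extensional S \<Longrightarrow> a \<in> S \<Longrightarrow> b \<in> S \<Longrightarrow> mv1 f a b \<in> extensional S"
  by (auto simp: extensional_def mv1_apply)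

lemma move_in_configs:
  assumes c: "c \<in> configs n k m" and p: "i \<in> {1..n}" "r \<in> {1..k}" and pos: "c (i, r) > 0"
  shows "move n c i r \<in> configs n k m"
proof -
  have ext: "c \<in> extensional ({1..n} \<times> {1..k})" using c unfolding configs_def by (auto simp: PiE_iff)
  have "move n c i r \<in> extensional ({1..n} \<times> {1..k})"
    unfolding move_mv1 using p by (intro mv1_ext[OF ext]) (auto simp: next_site_def)
  moreover have "(\<Sum>j=1..n. move n c i r (j, r')) = m r'" if r': "r' \<in> {1..k}" for r'
  proof (cases "r' = r")
    case True
    have eq: "(\<lambda>j. move n c i r (j, r')) = mv1 (\<lambda>j. c (j, r)) i (next_site n i)"
      using True by (auto simp: move_mv1 mv1_apply)
    have "(\<Sum>j=1..n. move n c i r (j, r')) = sum (mv1 (\<lambda>j. c (j, r)) i (next_site n i)) {1..n}"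
      by (simp only: eq[symmetric])
    also have "\<dots> = (\<Sum>j=1..n. c (j, r))"
      by (rule sum_mv1) (use p pos in \<open>auto simp: next_site_def\<close>)
    finally have "(\<Sum>j=1..n. move n c i r (j, r')) = (\<Sum>j=1..n. c (j, r))" .
    then show ?thesis using c True p unfolding configs_def by auto
  next
    case False
    then have "(\<Sum>j=1..n. move n c i r (j, r')) = (\<Sum>j=1..n. c (j, r'))"
      by (auto simp: move_mv1 mv1_apply)
    then show ?thesis using c r' unfolding configs_def by auto
  qed
  ultimately show ?thesis unfolding configs_def by (auto simp: PiE_iff extensional_def)
qed

abbreviation "II n k \<equiv> {1..n} \<times> {1..k}"

lemma trans_rate_alt: "trans_rate n k x t c c' =
  (\<Sum>p\<in>{p\<in>II n k. c p > 0 \<and> move n c (fst p) (snd p) = c'}. jump_rate k x t c (fst p) (snd p))"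
  unfolding trans_rate_def by (rule sum.cong) (auto simp: split_def)

lemma jump_rate_zero: "c (j, r) = 0 \<Longrightarrow> jump_rate k x t c j r = 0"
  by (simp add: jump_rate_def)

lemma lemA:
  assumes c: "c \<in> configs n k m"
  shows "(\<Sum>c'\<in>configs n k m - {c}. trans_rate n k x t c c' * (F c' - F c)) =
         (\<Sum>p\<in>II n k. jump_rate k x t c (fst p) (snd p) * (F (move n c (fst p) (snd p)) - F c))"
    (is "?L = ?R")
proof -
  let ?C = "configs n k m"
  let ?T = "{p\<in>II n k. c p > 0}"
  let ?mv = "\<lambda>p. move n c (fst p) (snd p)"
  let ?h = "\<lambda>p. jump_rate k x t c (fst p) (snd p) * (F (?mv p) - F c)"
  have "?L = (\<Sum>c'\<in>?C - {c}. \<Sum>p\<in>{p\<in>{p\<in>?T. ?mv p \<in> ?C - {c}}. ?mv p = c'}. ?h p)"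
  proof (rule sum.cong[OF refl])
    fix c' assume c': "c' \<in> ?C - {c}"
    have "trans_rate n k x t c c' * (F c' - F c) =
       (\<Sum>p\<in>{p\<in>II n k. c p > 0 \<and> ?mv p = c'}. jump_rate k x t c (fst p) (snd p) * (F c' - F c))"
      unfolding trans_rate_alt by (simp add: sum_distrib_right)
    also have "\<dots> = (\<Sum>p\<in>{p\<in>{p\<in>?T. ?mv p \<in> ?C - {c}}. ?mv p = c'}. ?h p)"
      using c' by (intro sum.cong) auto
    finally show "trans_rate n k x t c c' * (F c' - F c) = (\<Sum>p\<in>{p\<in>{p\<in>?T. ?mv p \<in> ?C - {c}}. ?mv p = c'}. ?h p)" .
  qed
  also have "\<dots> = (\<Sum>p\<in>{p\<in>?T. ?mv p \<in> ?C - {c}}. ?h p)"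
    by (rule sum.group) (auto simp: configs_finite)
  also have "\<dots> = (\<Sum>p\<in>?T. ?h p)"
  proof (rule sum.mono_neutral_left)
    show "\<forall>p\<in>?T - {p\<in>?T. ?mv p \<in> ?C - {c}}. ?h p = 0"
    proof
      fix p assume p: "p \<in> ?T - {p\<in>?T. ?mv p \<in> ?C - {c}}"
      then have "?mv p \<in> ?C" using move_in_configs[OF c, of "fst p" "snd p"] by auto
      then have "?mv p = c" using p by auto
      then show "?h p = 0" by simp
    qed
  qed auto
  also have "\<dots> = ?R"
    by (rule sum.mono_neutral_left) (auto simp: jump_rate_zero)
  finally show ?thesis .
qed

lemma sum_minus_if: "finite C \<Longrightarrow> (\<Sum>c'\<in>C-{c}. g c') = (\<Sum>c'\<in>C. if c' \<noteq> c then g c' else 0)"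
  by (rule sum.mono_neutral_cong_left) auto

lemma gen:
  assumes st: "stationary n k m x t \<pi>"
  shows "(\<Sum>c\<in>configs n k m. \<pi> c * (\<Sum>p\<in>II n k. jump_rate k x t c (fst p) (snd p) *
            (F (move n c (fst p) (snd p)) - F c))) = 0"
proof -
  let ?C = "configs n k m"
  let ?R = "trans_rate n k x t"
  have bal: "\<And>c. c \<in> ?C \<Longrightarrow> (\<Sum>c'\<in>?C - {c}. \<pi> c' * ?R c' c) = \<pi> c * (\<Sum>c'\<in>?C - {c}. ?R c c')"
    using st unfolding stationary_def by auto
  have fin: "finite ?C" by (rule configs_finite)
  have "(\<Sum>c\<in>?C. (\<Sum>c'\<in>?C - {c}. \<pi> c' * ?R c' c) * F c) = (\<Sum>c\<in>?C. \<pi> c * (\<Sum>c'\<in>?C - {c}. ?R c c') * F c)"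
    using bal by simp
  moreover have "(\<Sum>c\<in>?C. (\<Sum>c'\<in>?C - {c}. \<pi> c' * ?R c' c) * F c) =
      (\<Sum>c\<in>?C. \<Sum>c'\<in>?C. if c' \<noteq> c then \<pi> c' * ?R c' c * F c else 0)"
    using fin by (auto simp add: sum_distrib_right sum_minus_if intro!: sum.cong)
  moreover have "\<dots> = (\<Sum>c'\<in>?C. \<Sum>c\<in>?C. if c' \<noteq> c then \<pi> c' * ?R c' c * F c else 0)"
    by (rule sum.swap)
  moreover have "\<dots> = (\<Sum>c'\<in>?C. \<pi> c' * (\<Sum>c\<in>?C - {c'}. ?R c' c * F c))"
    using fin by (auto simp add: sum_distrib_left sum_minus_if mult.assoc intro!: sum.cong)
  ultimately have "(\<Sum>c\<in>?C. \<pi> c * (\<Sum>c'\<in>?C - {c}. ?R c c' * F c')) = (\<Sum>c\<in>?C. \<pi> c * (\<Sum>c'\<in>?C - {c}. ?R c c') * F c)"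
    by simp
  then have "(\<Sum>c\<in>?C. \<pi> c * (\<Sum>c'\<in>?C - {c}. ?R c c' * (F c' - F c))) = 0"
    by (simp add: right_diff_distrib sum_subtractf sum_distrib_right sum_distrib_left mult.assoc)
  then show ?thesis
    by (simp add: lemA cong: sum.cong)
qed




definition proj :: "nat \<Rightarrow> nat \<Rightarrow> nat \<Rightarrow> (nat \<times> nat \<Rightarrow> nat) \<Rightarrow> nat \<Rightarrow> nat" where
  "proj n k j c = (\<lambda>i\<in>{1..n}. \<Sum>r\<in>{j..k}. c (i, r))"

definition zr :: "(nat \<Rightarrow> real) \<Rightarrow> real \<Rightarrow> (nat \<Rightarrow> nat) \<Rightarrow> nat \<Rightarrow> real" where
  "zr x t \<eta> i = qint (\<eta> i) t / x i"

definition zmv :: "nat \<Rightarrow> (nat \<Rightarrow> nat) \<Rightarrow> nat \<Rightarrow> nat \<Rightarrow> nat" where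
  "zmv n \<eta> i = mv1 \<eta> i (next_site n i)"

lemma proj_in:
  assumes c: "c \<in> configs n k m" and j: "1 \<le> j"
  shows "proj n k j c \<in> compositions n (\<Sum>l=j..k. m l)"
proof -
  have s: "(\<Sum>i=1..n. proj n k j c i) = (\<Sum>l=j..k. m l)"
  proof -
    have "(\<Sum>i=1..n. proj n k j c i) = (\<Sum>i=1..n. \<Sum>r\<in>{j..k}. c (i, r))"
      by (simp add: proj_def)
    also have "\<dots> = (\<Sum>r\<in>{j..k}. \<Sum>i=1..n. c (i, r))" by (rule sum.swap)
    also have "\<dots> = (\<Sum>r\<in>{j..k}. m r)"
      using c j unfolding configs_def by (intro sum.cong) auto
    finally show ?thesis .
  qed
  moreover have "proj n k j c i \<le> (\<Sum>l=j..k. m l)" if "i \<in> {1..n}" for i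
    using member_le_sum[of i "{1..n}" "proj n k j c"] s that by simp
  ultimately show ?thesis unfolding compositions_def by (auto simp: proj_def PiE_iff)
qed

lemma proj_move_other:
  assumes "r \<notin> {j..k}"
  shows "proj n k j (move n c i r) = proj n k j c"
  using assms unfolding proj_def by (intro ext) (auto simp: move_mv1 mv1_apply intro!: sum.cong)

lemma proj_move:
  assumes i: "i \<in> {1..n}" and r: "r \<in> {j..k}" and pos: "c (i, r) > 0"
  shows "proj n k j (move n c i r) = zmv n (proj n k j c) i"
proof (rule ext)
  fix p
  show "proj n k j (move n c i r) p = zmv n (proj n k j c) i p"
  proof (cases "p \<in> {1..n}")
    case False
    then have "p \<noteq> i" "p \<noteq> next_site n i" using i next_site_in[OF i] by auto
    then show ?thesis using False by (auto simp: proj_def zmv_def mv1_apply)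
  next
    case True
    let ?g = "\<lambda>r'. c (p, r')"
    let ?v = "mv1 (\<lambda>q. c (q, r)) i (next_site n i) p"
    have eq: "(\<lambda>r'. move n c i r (p, r')) = ?g(r := ?v)"
      by (auto simp: move_mv1 mv1_apply)
    have su: "(\<Sum>r'\<in>{j..k}. move n c i r (p, r')) + ?g r = sum ?g {j..k} + ?v"
      unfolding eq using r by (intro sum_upd) auto
    have le: "?g r \<le> sum ?g {j..k}" using r by (intro member_le_sum) auto
    have le2: "c (i, r) \<le> (\<Sum>r'\<in>{j..k}. c (i, r'))" using r by (intro member_le_sum) auto
    show ?thesis using True su le le2 pos i
      by (auto simp: proj_def zmv_def mv1_apply split: if_splits)
  qed
qed

lemma tele:
  fixes j k :: nat and g :: "nat \<Rightarrow> nat" and t :: real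
  shows "j \<le> k + 1 \<Longrightarrow> (\<Sum>r\<in>{j..k}. t ^ (\<Sum>s\<in>{r<..k}. g s) * qint (g r) t) = qint (\<Sum>s\<in>{j..k}. g s) t"
proof (induction "k + 1 - j" arbitrary: j)
  case 0
  then show ?case by simp
next
  case (Suc d)
  then have jk: "j \<le> k" by simp
  have set: "{j..k} = insert j {Suc j..k}" using jk by auto
  have set2: "{j<..k} = {Suc j..k}" by auto
  have IH: "(\<Sum>r\<in>{Suc j..k}. t ^ (\<Sum>s\<in>{r<..k}. g s) * qint (g r) t) = qint (\<Sum>s\<in>{Suc j..k}. g s) t"
    using Suc by simp
  have q: "qint (g j + sum g {Suc j..k}) t = qint (sum g {Suc j..k}) t + t ^ sum g {Suc j..k} * qint (g j) t"
    using qint_add[of "sum g {Suc j..k}" "g j" t] by (simp add: add.commute)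
  show ?case unfolding set using IH set2 q by simp
qed

lemma species_sum:
  assumes i: "i \<in> {1..n}" and j: "1 \<le> j" "j \<le> k + 1"
  shows "(\<Sum>r\<in>{1..k}. jump_rate k x t c i r * (f (proj n k j (move n c i r)) - f (proj n k j c)))
       = zr x t (proj n k j c) i * (f (zmv n (proj n k j c) i) - f (proj n k j c))"
proof -
  let ?D = "f (zmv n (proj n k j c) i) - f (proj n k j c)"
  have "(\<Sum>r\<in>{1..k}. jump_rate k x t c i r * (f (proj n k j (move n c i r)) - f (proj n k j c)))
      = (\<Sum>r\<in>{j..k}. jump_rate k x t c i r * ?D)"
  proof (rule sum.mono_neutral_cong_right)
    show "\<forall>r\<in>{1..k} - {j..k}. jump_rate k x t c i r * (f (proj n k j (move n c i r)) - f (proj n k j c)) = 0"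
      by (auto simp: proj_move_other)
    show "\<And>r. r \<in> {j..k} \<Longrightarrow> jump_rate k x t c i r * (f (proj n k j (move n c i r)) - f (proj n k j c)) =
        jump_rate k x t c i r * ?D"
    proof -
      fix r assume r: "r \<in> {j..k}"
      show "jump_rate k x t c i r * (f (proj n k j (move n c i r)) - f (proj n k j c)) =
        jump_rate k x t c i r * ?D"
      proof (cases "c (i, r) = 0")
        case True then show ?thesis by (simp add: jump_rate_zero)
      next
        case False then show ?thesis using proj_move[OF i r] by simp
      qed
    qed
  qed (use j in auto)
  also have "\<dots> = (\<Sum>r\<in>{j..k}. jump_rate k x t c i r) * ?D" by (simp add: sum_distrib_right)
  also have "(\<Sum>r\<in>{j..k}. jump_rate k x t c i r) = inverse (x i) * qint (\<Sum>r\<in>{j..k}. c (i, r)) t"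
  proof -
    have "(\<Sum>r\<in>{j..k}. jump_rate k x t c i r) = inverse (x i) * (\<Sum>r\<in>{j..k}. t ^ (\<Sum>s\<in>{r<..k}. c (i, s)) * qint (c (i, r)) t)"
      by (simp add: jump_rate_def sum_distrib_left mult.assoc)
    then show ?thesis using tele[OF j(2), where g="\<lambda>r. c (i, r)" and t=t] by simp
  qed
  finally have fin: "(\<Sum>r\<in>{1..k}. jump_rate k x t c i r * (f (proj n k j (move n c i r)) - f (proj n k j c)))
       = inverse (x i) * qint (\<Sum>r\<in>{j..k}. c (i, r)) t * ?D" .
  have pi: "(\<Sum>r\<in>{j..k}. c (i, r)) = proj n k j c i" using i by (simp add: proj_def)
  show ?thesis using fin unfolding pi by (simp add: zr_def divide_inverse mult.commute)
qed

definition nu :: "nat \<Rightarrow> nat \<Rightarrow> (nat \<Rightarrow> nat) \<Rightarrow> nat \<Rightarrow> ((nat \<times> nat \<Rightarrow> nat) \<Rightarrow> real) \<Rightarrow> (nat \<Rightarrow> nat) \<Rightarrow> real" where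
  "nu n k m j \<pi> \<eta> = (\<Sum>c\<in>{c\<in>configs n k m. proj n k j c = \<eta>}. \<pi> c)"

lemma sum_nu:
  assumes j: "1 \<le> j"
  shows "(\<Sum>c\<in>configs n k m. \<pi> c * G (proj n k j c)) =
         (\<Sum>\<eta>\<in>compositions n (\<Sum>l=j..k. m l). nu n k m j \<pi> \<eta> * G \<eta>)"
proof -
  have fZ: "finite (compositions n (\<Sum>l=j..k. m l))"
    unfolding compositions_def by (rule finite_subset[of _ "PiE {1..n} (\<lambda>_. {..(\<Sum>l=j..k. m l)})"])
      (auto intro!: finite_PiE)
  have "(\<Sum>c\<in>configs n k m. \<pi> c * G (proj n k j c)) =
    (\<Sum>\<eta>\<in>compositions n (\<Sum>l=j..k. m l). \<Sum>c\<in>{c\<in>configs n k m. proj n k j c = \<eta>}. \<pi> c * G (proj n k j c))"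
    by (rule sum.group[symmetric]) (use configs_finite fZ proj_in j in auto)
  also have "\<dots> = (\<Sum>\<eta>\<in>compositions n (\<Sum>l=j..k. m l). nu n k m j \<pi> \<eta> * G \<eta>)"
    unfolding nu_def sum_distrib_right by (intro sum.cong) auto
  finally show ?thesis .
qed

lemma zgen_nu:
  assumes st: "stationary n k m x t \<pi>" and j: "1 \<le> j" "j \<le> k + 1"
  shows "(\<Sum>\<eta>\<in>compositions n (\<Sum>l=j..k. m l). nu n k m j \<pi> \<eta> *
            (\<Sum>i\<in>{1..n}. zr x t \<eta> i * (f (zmv n \<eta> i) - f \<eta>))) = 0"
proof -
  let ?G = "\<lambda>\<eta>. (\<Sum>i\<in>{1..n}. zr x t \<eta> i * (f (zmv n \<eta> i) - f \<eta>))"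
  have "0 = (\<Sum>c\<in>configs n k m. \<pi> c * (\<Sum>p\<in>II n k. jump_rate k x t c (fst p) (snd p) *
            ((f \<circ> proj n k j) (move n c (fst p) (snd p)) - (f \<circ> proj n k j) c)))"
    using gen[OF st] by metis
  also have "\<dots> = (\<Sum>c\<in>configs n k m. \<pi> c * ?G (proj n k j c))"
  proof (rule sum.cong[OF refl])
    fix c
    have "(\<Sum>p\<in>II n k. jump_rate k x t c (fst p) (snd p) *
            ((f \<circ> proj n k j) (move n c (fst p) (snd p)) - (f \<circ> proj n k j) c))
       = (\<Sum>i\<in>{1..n}. \<Sum>r\<in>{1..k}. jump_rate k x t c i r *
            (f (proj n k j (move n c i r)) - f (proj n k j c)))"
      by (simp add: sum.cartesian_product split_def)
    also have "\<dots> = ?G (proj n k j c)"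
      using species_sum[OF _ j] by (intro sum.cong) auto
    finally show "\<pi> c * (\<Sum>p\<in>II n k. jump_rate k x t c (fst p) (snd p) *
            ((f \<circ> proj n k j) (move n c (fst p) (snd p)) - (f \<circ> proj n k j) c)) = \<pi> c * ?G (proj n k j c)"
      by simp
  qed
  also have "\<dots> = (\<Sum>\<eta>\<in>compositions n (\<Sum>l=j..k. m l). nu n k m j \<pi> \<eta> * ?G \<eta>)"
    by (rule sum_nu[OF j(1)])
  finally show ?thesis by simp
qed




definition wt :: "nat \<Rightarrow> (nat \<Rightarrow> real) \<Rightarrow> real \<Rightarrow> (nat \<Rightarrow> nat) \<Rightarrow> real" where
  "wt n x t \<eta> = (\<Prod>i=1..n. x i ^ \<eta> i / qfact (\<eta> i) t)"

lemma comp_finite: "finite (compositions n N)"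
  unfolding compositions_def by (rule finite_subset[of _ "PiE {1..n} (\<lambda>_. {..N})"]) (auto intro!: finite_PiE)

lemma mv1_in_comp:
  assumes e: "\<eta> \<in> compositions n N" and a: "a \<in> {1..n}" and b: "b \<in> {1..n}" and pos: "\<eta> a > 0"
  shows "mv1 \<eta> a b \<in> compositions n N"
proof -
  have ext: "\<eta> \<in> extensional {1..n}" using e unfolding compositions_def by (auto simp: PiE_iff)
  have s: "sum (mv1 \<eta> a b) {1..n} = N" using sum_mv1[of "{1..n}" a b \<eta>] a b pos e
    unfolding compositions_def by auto
  have "mv1 \<eta> a b y \<le> N" if "y \<in> {1..n}" for y
    using member_le_sum[of y "{1..n}" "mv1 \<eta> a b"] s that by simp
  then show ?thesis using mv1_ext[OF ext a b] s unfolding compositions_def by (auto simp: PiE_iff)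
qed

lemma zmv_in_comp:
  "\<eta> \<in> compositions n N \<Longrightarrow> i \<in> {1..n} \<Longrightarrow> \<eta> i > 0 \<Longrightarrow> zmv n \<eta> i \<in> compositions n N"
  unfolding zmv_def by (rule mv1_in_comp) (auto simp: next_site_def)

lemma zr_zero: "\<eta> i = 0 \<Longrightarrow> zr x t \<eta> i = 0" by (simp add: zr_def)

lemma wt_pos: "\<forall>i\<in>{1..n}. x i > 0 \<Longrightarrow> t > 0 \<Longrightarrow> wt n x t \<eta> > 0"
  unfolding wt_def by (rule prod_pos) (auto intro!: divide_pos_pos qfact_pos)

lemma wt_zr:
  assumes x: "\<forall>i\<in>{1..n}. x i > 0" and t: "t > 0" and i: "i \<in> {1..n}" and pos: "\<eta> i > 0"
  shows "wt n x t \<eta> * zr x t \<eta> i = wt n x t (zmv n \<eta> i) * zr x t (zmv n \<eta> i) (next_site n i)"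
proof (cases "next_site n i = i")
  case True
  then show ?thesis using pos by (simp add: zmv_def mv1_same)
next
  case False
  let ?b = "next_site n i"
  let ?S = "{1..n}"
  let ?\<eta>' = "zmv n \<eta> i"
  have b: "?b \<in> ?S" using next_site_in[OF i] .
  define g where "g \<eta> p = x p ^ \<eta> p / qfact (\<eta> p) t" for \<eta> p
  have split: "wt n x t \<eta> = g \<eta> i * g \<eta> ?b * prod (g \<eta>) (?S - {i} - {?b})" for \<eta>
  proof -
    have "wt n x t \<eta> = g \<eta> i * prod (g \<eta>) (?S - {i})"
      unfolding wt_def g_def using i by (simp add: prod.remove)
    also have "prod (g \<eta>) (?S - {i}) = g \<eta> ?b * prod (g \<eta>) (?S - {i} - {?b})"
      using b False by (intro prod.remove) auto
    finally show ?thesis by simp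
  qed
  have rest: "prod (g \<eta>) (?S - {i} - {?b}) = prod (g ?\<eta>') (?S - {i} - {?b})"
    by (intro prod.cong) (auto simp: g_def zmv_def mv1_apply)
  obtain a where a: "\<eta> i = Suc a" using pos by (cases "\<eta> i") auto
  have e1: "?\<eta>' i = a" using False a by (simp add: zmv_def mv1_apply)
  have e2: "?\<eta>' ?b = Suc (\<eta> ?b)" using False by (simp add: zmv_def mv1_apply)
  have xi: "x i > 0" and xb: "x ?b > 0" using x i b by auto
  have q1: "qfact a t > 0" "qfact (\<eta> ?b) t > 0" using qfact_pos t by auto
  have q2: "qint (Suc a) t > 0" "qint (Suc (\<eta> ?b)) t > 0" using qint_pos t by auto
  show ?thesis
    unfolding split[of \<eta>] split[of ?\<eta>'] rest
    using xi xb q1 q2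
    by (simp add: g_def zr_def a e1 e2 qfact_Suc field_simps)
qed

lemma wgen:
  assumes x: "\<forall>i\<in>{1..n}. x i > 0" and t: "t > 0"
  shows "(\<Sum>\<eta>\<in>compositions n N. wt n x t \<eta> * (\<Sum>i\<in>{1..n}. zr x t \<eta> i * (f (zmv n \<eta> i) - f \<eta>))) = 0"
proof -
  let ?Z = "compositions n N"
  have per_i: "(\<Sum>\<eta>\<in>?Z. wt n x t \<eta> * zr x t \<eta> i * f (zmv n \<eta> i)) =
               (\<Sum>\<eta>\<in>?Z. wt n x t \<eta> * zr x t \<eta> (next_site n i) * f \<eta>)" if i: "i \<in> {1..n}" for i
  proof -
    let ?b = "next_site n i"
    have b: "?b \<in> {1..n}" using next_site_in[OF i] .
    have "(\<Sum>\<eta>\<in>?Z. wt n x t \<eta> * zr x t \<eta> i * f (zmv n \<eta> i)) =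
          (\<Sum>\<eta>\<in>{\<eta>\<in>?Z. \<eta> i > 0}. wt n x t \<eta> * zr x t \<eta> i * f (zmv n \<eta> i))"
      by (rule sum.mono_neutral_right) (auto simp: comp_finite zr_zero)
    also have "\<dots> = (\<Sum>\<eta>\<in>{\<eta>\<in>?Z. \<eta> i > 0}. (\<lambda>\<eta>'. wt n x t \<eta>' * zr x t \<eta>' ?b * f \<eta>') (zmv n \<eta> i))"
      using wt_zr[OF x t i] by (intro sum.cong) auto
    also have "\<dots> = (\<Sum>\<eta>'\<in>{\<eta>'\<in>?Z. \<eta>' ?b > 0}. wt n x t \<eta>' * zr x t \<eta>' ?b * f \<eta>')"
    proof (rule sum.reindex_bij_betw)
      show "bij_betw (\<lambda>\<eta>. zmv n \<eta> i) {\<eta>\<in>?Z. \<eta> i > 0} {\<eta>'\<in>?Z. \<eta>' ?b > 0}"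
      proof (rule bij_betw_byWitness[where f'="\<lambda>\<eta>'. mv1 \<eta>' ?b i"])
        show "\<forall>a\<in>{\<eta>\<in>?Z. \<eta> i > 0}. mv1 (zmv n a i) ?b i = a"
          by (auto simp: zmv_def mv1_inv)
        show "\<forall>a\<in>{\<eta>'\<in>?Z. \<eta>' ?b > 0}. zmv n (mv1 a ?b i) i = a"
          by (auto simp: zmv_def mv1_inv)
        show "(\<lambda>\<eta>. zmv n \<eta> i) ` {\<eta>\<in>?Z. \<eta> i > 0} \<subseteq> {\<eta>'\<in>?Z. \<eta>' ?b > 0}"
          using i by (auto simp: zmv_def mv1_pos intro!: zmv_in_comp[unfolded zmv_def])
        show "(\<lambda>\<eta>'. mv1 \<eta>' ?b i) ` {\<eta>'\<in>?Z. \<eta>' ?b > 0} \<subseteq> {\<eta>\<in>?Z. \<eta> i > 0}"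
          using i b by (auto simp: mv1_pos intro!: mv1_in_comp)
      qed
    qed
    also have "\<dots> = (\<Sum>\<eta>\<in>?Z. wt n x t \<eta> * zr x t \<eta> ?b * f \<eta>)"
      by (rule sum.mono_neutral_left) (auto simp: comp_finite zr_zero)
    finally show ?thesis .
  qed
  have "(\<Sum>\<eta>\<in>?Z. wt n x t \<eta> * (\<Sum>i\<in>{1..n}. zr x t \<eta> i * f (zmv n \<eta> i))) =
        (\<Sum>i\<in>{1..n}. \<Sum>\<eta>\<in>?Z. wt n x t \<eta> * zr x t \<eta> i * f (zmv n \<eta> i))"
    by (simp add: sum_distrib_left sum.swap[of _ ?Z] mult.assoc)
  also have "\<dots> = (\<Sum>i\<in>{1..n}. \<Sum>\<eta>\<in>?Z. wt n x t \<eta> * zr x t \<eta> (next_site n i) * f \<eta>)"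
    by (rule sum.cong[OF refl], rule per_i) simp
  also have "\<dots> = (\<Sum>\<eta>\<in>?Z. wt n x t \<eta> * f \<eta> * (\<Sum>i\<in>{1..n}. zr x t \<eta> (next_site n i)))"
    by (simp add: sum_distrib_left mult_ac) (rule sum.swap)
  also have "\<dots> = (\<Sum>\<eta>\<in>?Z. wt n x t \<eta> * f \<eta> * (\<Sum>i\<in>{1..n}. zr x t \<eta> i))"
    using sum.reindex_bij_betw[OF next_bij, of "\<lambda>i. zr x t _ i"] by simp
  finally show ?thesis
    by (simp add: right_diff_distrib sum_subtractf sum_distrib_left mult_ac)
qed




definition ee :: "nat \<Rightarrow> nat \<Rightarrow> nat \<Rightarrow> nat" where
  "ee n N = (\<lambda>p\<in>{1..n}. if p = 1 then N else 0)"

definition step :: "nat \<Rightarrow> nat \<Rightarrow> (nat \<Rightarrow> nat) \<Rightarrow> (nat \<Rightarrow> nat) \<Rightarrow> bool" where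
  "step n N \<eta> \<eta>' \<longleftrightarrow> \<eta> \<in> compositions n N \<and> (\<exists>i\<in>{1..n}. \<eta> i > 0 \<and> zmv n \<eta> i = \<eta>')"

lemma ee_in: "n \<ge> 1 \<Longrightarrow> ee n N \<in> compositions n N"
proof -
  assume n: "n \<ge> 1"
  have "(\<Sum>p=1..n. ee n N p) = (\<Sum>p\<in>{1}. ee n N p)"
    by (rule sum.mono_neutral_right) (use n in \<open>auto simp: ee_def\<close>)
  then show ?thesis using n unfolding compositions_def by (auto simp: ee_def)
qed

lemma is_ee:
  assumes e: "\<eta> \<in> compositions n N" and n: "n \<ge> 1" and z: "\<forall>p\<in>{2..n}. \<eta> p = 0"
  shows "\<eta> = ee n N"
proof
  fix p
  have ext: "\<eta> \<in> extensional {1..n}" using e unfolding compositions_def by (auto simp: PiE_iff)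
  have "N = (\<Sum>p=1..n. \<eta> p)" using e unfolding compositions_def by auto
  also have "\<dots> = (\<Sum>p\<in>{1}. \<eta> p)"
    by (rule sum.mono_neutral_right) (use n z in auto)
  finally have "\<eta> 1 = N" by simp
  then show "\<eta> p = ee n N p" using ext z by (cases "p \<in> {1..n}") (auto simp: ee_def extensional_def)
qed

lemma wsum_mv1:
  assumes fin: "finite S" and ab: "a \<in> S" "b \<in> S" "a \<noteq> b" and pos: "\<eta> a > 0"
  shows "(\<Sum>y\<in>S. u y * mv1 \<eta> a b y) + u a = (\<Sum>y\<in>S. u y * \<eta> y) + (u b :: nat)"
proof -
  let ?F = "\<lambda>y. u y * \<eta> y"
  let ?F' = "?F(a := u a * (\<eta> a - 1))"
  have G: "(\<lambda>y. u y * mv1 \<eta> a b y) = ?F'(b := u b * (\<eta> b + 1))"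
    using ab by (auto simp: mv1_apply)
  have 1: "sum (?F'(b := u b * (\<eta> b + 1))) S + ?F' b = sum ?F' S + u b * (\<eta> b + 1)"
    using sum_upd[OF fin ab(2)] by metis
  have 2: "sum ?F' S + ?F a = sum ?F S + u a * (\<eta> a - 1)"
    using sum_upd[OF fin ab(1)] by metis
  have 3: "u a * \<eta> a = u a * (\<eta> a - 1) + u a" using pos by (cases "\<eta> a") auto
  show ?thesis unfolding G using 1 2 3 ab(3) by (simp add: algebra_simps)
qed

lemma reach_ee:
  assumes n: "n \<ge> 1"
  shows "\<eta> \<in> compositions n N \<Longrightarrow> (step n N)\<^sup>*\<^sup>* \<eta> (ee n N)"
proof (induction "\<Sum>y\<in>{1..n}. (if y = 1 then 0 else n + 1 - y) * \<eta> y" arbitrary: \<eta> rule: less_induct)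
  case less
  let ?u = "\<lambda>y::nat. if y = 1 then 0 else n + 1 - y"
  show ?case
  proof (cases "\<forall>p\<in>{2..n}. \<eta> p = 0")
    case True
    then show ?thesis using is_ee[OF less.prems n] by simp
  next
    case False
    then obtain p where p: "p \<in> {2..n}" "\<eta> p > 0" by auto
    let ?q = "next_site n p"
    have pin: "p \<in> {1..n}" using p by auto
    have qin: "?q \<in> {1..n}" using next_site_in[OF pin] .
    have pq: "p \<noteq> ?q" and uq: "?u ?q < ?u p" using p by (auto simp: next_site_def)
    have w: "(\<Sum>y\<in>{1..n}. ?u y * mv1 \<eta> p ?q y) + ?u p = (\<Sum>y\<in>{1..n}. ?u y * \<eta> y) + ?u ?q"
      by (rule wsum_mv1) (use pin qin pq p in auto)
    have "(step n N)\<^sup>*\<^sup>* (zmv n \<eta> p) (ee n N)"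
      by (rule less.hyps) (use w uq in \<open>simp add: zmv_def\<close>, intro zmv_in_comp less.prems pin p(2))
    moreover have "step n N \<eta> (zmv n \<eta> p)" using less.prems pin p unfolding step_def by auto
    ultimately show ?thesis by (metis converse_rtranclp_into_rtranclp)
  qed
qed

lemma ee_reach:
  assumes n: "n \<ge> 1"
  shows "\<eta> \<in> compositions n N \<Longrightarrow> (step n N)\<^sup>*\<^sup>* (ee n N) \<eta>"
proof (induction "\<Sum>y\<in>{1..n}. (y - 1) * \<eta> y" arbitrary: \<eta> rule: less_induct)
  case less
  show ?case
  proof (cases "\<forall>p\<in>{2..n}. \<eta> p = 0")
    case True
    then show ?thesis using is_ee[OF less.prems n] by simp
  next
    case False
    then obtain p where p: "p \<in> {2..n}" "\<eta> p > 0" by auto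
    let ?q = "p - 1"
    have pin: "p \<in> {1..n}" and qin: "?q \<in> {1..n}" and pq: "p \<noteq> ?q" using p by auto
    have nq: "next_site n ?q = p" using p by (auto simp: next_site_def)
    let ?\<eta> = "mv1 \<eta> p ?q"
    have w: "(\<Sum>y\<in>{1..n}. (y - 1) * ?\<eta> y) + (p - 1) = (\<Sum>y\<in>{1..n}. (y - 1) * \<eta> y) + (?q - 1)"
      by (rule wsum_mv1) (use pin qin pq p in auto)
    have inZ: "?\<eta> \<in> compositions n N" by (rule mv1_in_comp) (use less.prems pin qin p in auto)
    have "(step n N)\<^sup>*\<^sup>* (ee n N) ?\<eta>"
      by (rule less.hyps) (use w p inZ in auto)
    moreover have "step n N ?\<eta> \<eta>"
      unfolding step_def using inZ qin mv1_pos[of \<eta> p ?q] p mv1_inv[of \<eta> p ?q] nq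
      by (auto simp: zmv_def intro!: bexI[of _ ?q])
    ultimately show ?thesis by (metis rtranclp.rtrancl_into_rtrancl)
  qed
qed

lemma bal_ind:
  assumes g: "(\<Sum>\<eta>\<in>compositions n N. \<mu> \<eta> * (\<Sum>i\<in>{1..n}. zr x t \<eta> i *
        ((\<lambda>\<eta>. if \<eta> = \<eta>0 then 1 else 0) (zmv n \<eta> i) - (\<lambda>\<eta>. if \<eta> = \<eta>0 then 1 else 0) \<eta>))) = 0"
    and e0: "\<eta>0 \<in> compositions n N"
  shows "(\<Sum>\<eta>\<in>compositions n N. \<mu> \<eta> * (\<Sum>i\<in>{1..n}. zr x t \<eta> i * (if zmv n \<eta> i = \<eta>0 then 1 else 0)))
       = \<mu> \<eta>0 * (\<Sum>i\<in>{1..n}. zr x t \<eta>0 i)"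
proof -
  let ?Z = "compositions n N"
  let ?A = "\<lambda>\<eta>. \<Sum>i\<in>{1..n}. zr x t \<eta> i * (if zmv n \<eta> i = \<eta>0 then 1 else 0)"
  let ?B = "\<lambda>\<eta>. \<Sum>i\<in>{1..n}. zr x t \<eta> i"
  have "(\<Sum>\<eta>\<in>?Z. \<mu> \<eta> * (\<Sum>i\<in>{1..n}. zr x t \<eta> i *
        ((\<lambda>\<eta>. if \<eta> = \<eta>0 then 1 else 0) (zmv n \<eta> i) - (\<lambda>\<eta>. if \<eta> = \<eta>0 then 1 else 0) \<eta>)))
      = (\<Sum>\<eta>\<in>?Z. \<mu> \<eta> * ?A \<eta>) - (\<Sum>\<eta>\<in>?Z. if \<eta> = \<eta>0 then \<mu> \<eta> * ?B \<eta> else 0)"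
  proof -
    have "\<And>\<eta>. (\<Sum>i\<in>{1..n}. zr x t \<eta> i *
        ((\<lambda>\<eta>. if \<eta> = \<eta>0 then 1 else 0) (zmv n \<eta> i) - (\<lambda>\<eta>. if \<eta> = \<eta>0 then 1 else 0) \<eta>))
        = ?A \<eta> - (if \<eta> = \<eta>0 then 1 else 0) * ?B \<eta>"
      by (simp only: right_diff_distrib sum_subtractf) (simp add: sum_distrib_right[symmetric] mult.commute)
    then show ?thesis by (simp add: right_diff_distrib sum_subtractf) (intro sum.cong, auto)
  qed
  also have "(\<Sum>\<eta>\<in>?Z. if \<eta> = \<eta>0 then \<mu> \<eta> * ?B \<eta> else 0) = \<mu> \<eta>0 * ?B \<eta>0"
    using e0 comp_finite by (simp add: sum.delta')
  finally show ?thesis using g by simp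
qed




lemma zr_nonneg: "\<forall>i\<in>{1..n}. x i > 0 \<Longrightarrow> t > 0 \<Longrightarrow> i \<in> {1..n} \<Longrightarrow> zr x t \<eta> i \<ge> 0"
  unfolding zr_def by (auto intro!: divide_nonneg_pos qint_nonneg)

lemma zr_pos: "\<forall>i\<in>{1..n}. x i > 0 \<Longrightarrow> t > 0 \<Longrightarrow> i \<in> {1..n} \<Longrightarrow> \<eta> i > 0 \<Longrightarrow> zr x t \<eta> i > 0"
  unfolding zr_def by (auto intro!: divide_pos_pos qint_pos)

lemma unique:
  assumes n: "n \<ge> 1" and x: "\<forall>i\<in>{1..n}. x i > 0" and t: "t > 0"
    and g: "\<And>f. (\<Sum>\<eta>\<in>compositions n N. \<nu> \<eta> * (\<Sum>i\<in>{1..n}. zr x t \<eta> i * (f (zmv n \<eta> i) - f \<eta>))) = 0"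
  shows "\<exists>H. \<forall>\<eta>\<in>compositions n N. \<nu> \<eta> = H * wt n x t \<eta>"
proof -
  let ?Z = "compositions n N"
  let ?w = "wt n x t"
  define h where "h \<eta> = \<nu> \<eta> / ?w \<eta>" for \<eta>
  define H where "H = Max (h ` ?Z)"
  have fZ: "finite ?Z" by (rule comp_finite)
  have neZ: "?Z \<noteq> {}" using ee_in[OF n] by auto
  have wpos: "\<And>\<eta>. ?w \<eta> > 0" using wt_pos[OF x t] .
  have "H \<in> h ` ?Z" using Max_in[of "h ` ?Z"] fZ neZ unfolding H_def by auto
  then obtain \<eta>s where \<eta>s: "\<eta>s \<in> ?Z" "h \<eta>s = H" by auto
  have hle: "\<And>\<eta>. \<eta> \<in> ?Z \<Longrightarrow> h \<eta> \<le> H" unfolding H_def using fZ by auto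
  have closed: "h \<eta> = H" if s: "step n N \<eta> \<eta>0" and e0: "\<eta>0 \<in> ?Z" and h0: "h \<eta>0 = H" for \<eta> \<eta>0
  proof -
    obtain i where i: "i \<in> {1..n}" "\<eta> i > 0" "zmv n \<eta> i = \<eta>0" and eZ: "\<eta> \<in> ?Z"
      using s unfolding step_def by auto
    let ?A = "\<lambda>\<eta>. \<Sum>i\<in>{1..n}. zr x t \<eta> i * (if zmv n \<eta> i = \<eta>0 then 1 else 0)"
    let ?B = "\<Sum>i\<in>{1..n}. zr x t \<eta>0 i"
    have b1: "(\<Sum>\<eta>\<in>?Z. \<nu> \<eta> * ?A \<eta>) = \<nu> \<eta>0 * ?B"
      by (rule bal_ind[OF g e0])
    have b2: "(\<Sum>\<eta>\<in>?Z. ?w \<eta> * ?A \<eta>) = ?w \<eta>0 * ?B"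
      by (rule bal_ind[OF wgen[OF x t] e0])
    have nu0: "\<nu> \<eta>0 = H * ?w \<eta>0" using h0 wpos[of \<eta>0] unfolding h_def by (simp add: field_simps)
    have "(\<Sum>\<eta>\<in>?Z. (H * ?w \<eta> - \<nu> \<eta>) * ?A \<eta>) = H * (\<Sum>\<eta>\<in>?Z. ?w \<eta> * ?A \<eta>) - (\<Sum>\<eta>\<in>?Z. \<nu> \<eta> * ?A \<eta>)"
      by (simp add: left_diff_distrib sum_subtractf sum_distrib_left mult.assoc)
    also have "\<dots> = 0" unfolding b1 b2 nu0 by simp
    finally have s0: "(\<Sum>\<eta>\<in>?Z. (H * ?w \<eta> - \<nu> \<eta>) * ?A \<eta>) = 0" .
    have Anon: "?A \<eta> \<ge> 0" for \<eta> using zr_nonneg[OF x t] by (intro sum_nonneg) auto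
    have nn: "\<forall>\<eta>\<in>?Z. (H * ?w \<eta> - \<nu> \<eta>) * ?A \<eta> \<ge> 0"
    proof
      fix \<eta> assume "\<eta> \<in> ?Z"
      then have "h \<eta> \<le> H" by (rule hle)
      then have "\<nu> \<eta> \<le> H * ?w \<eta>" using wpos[of \<eta>] unfolding h_def by (simp add: field_simps)
      then show "(H * ?w \<eta> - \<nu> \<eta>) * ?A \<eta> \<ge> 0" using Anon[of \<eta>] by simp
    qed
    then have "\<forall>\<eta>\<in>?Z. (H * ?w \<eta> - \<nu> \<eta>) * ?A \<eta> = 0"
      using sum_nonneg_eq_0_iff[OF fZ, of "\<lambda>\<eta>. (H * ?w \<eta> - \<nu> \<eta>) * ?A \<eta>"] s0 by simp
    then have "(H * ?w \<eta> - \<nu> \<eta>) * ?A \<eta> = 0" using eZ by blast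
    moreover have "?A \<eta> > 0"
    proof -
      have "zr x t \<eta> i * (if zmv n \<eta> i = \<eta>0 then 1 else 0) \<le> ?A \<eta>"
        using i zr_nonneg[OF x t] by (intro member_le_sum) auto
      moreover have "zr x t \<eta> i > 0" using zr_pos[OF x t] i by auto
      ultimately show ?thesis using i by simp
    qed
    ultimately have "\<nu> \<eta> = H * ?w \<eta>" by simp
    then show ?thesis unfolding h_def using wpos[of \<eta>] by simp
  qed
  have rt: "(step n N)\<^sup>*\<^sup>* a b \<Longrightarrow> b \<in> ?Z \<and> h b = H \<longrightarrow> a \<in> ?Z \<and> h a = H" for a b
  proof (induction rule: rtranclp_induct)
    case base then show ?case by simp
  next
    case (step y z)
    then show ?case using closed[of y z] unfolding step_def by auto
  qed
  have "ee n N \<in> ?Z \<and> h (ee n N) = H" using rt[OF ee_reach[OF n \<eta>s(1)]] \<eta>s by auto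
  then have "\<forall>\<eta>\<in>?Z. h \<eta> = H" using rt[OF reach_ee[OF n]] by blast
  then have "\<forall>\<eta>\<in>?Z. \<nu> \<eta> = H * ?w \<eta>"
  proof (intro ballI)
    fix \<eta> assume "\<forall>\<eta>\<in>?Z. h \<eta> = H" "\<eta> \<in> ?Z"
    then have "\<nu> \<eta> / ?w \<eta> = H" unfolding h_def by auto
    moreover have "?w \<eta> \<noteq> 0" using wpos[of \<eta>] by simp
    ultimately show "\<nu> \<eta> = H * ?w \<eta>" by (simp add: divide_eq_eq)
  qed
  then show ?thesis by blast
qed

lemma expectation:
  assumes st: "stationary n k m x t \<pi>" and j: "1 \<le> j" "j \<le> k + 1"
    and n: "n \<ge> 1" and x: "\<forall>i\<in>{1..n}. x i > 0" and t: "t > 0"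
  shows "(\<Sum>c\<in>configs n k m. \<pi> c * real (proj n k j c 1)) =
    (\<Sum>\<eta>\<in>compositions n (\<Sum>l=j..k. m l). real (\<eta> 1) * wt n x t \<eta>) /
    (\<Sum>\<eta>\<in>compositions n (\<Sum>l=j..k. m l). wt n x t \<eta>)"
proof -
  let ?Z = "compositions n (\<Sum>l=j..k. m l)"
  obtain H where H: "\<forall>\<eta>\<in>?Z. nu n k m j \<pi> \<eta> = H * wt n x t \<eta>"
    using unique[OF n x t zgen_nu[OF st j]] by blast
  have "1 = (\<Sum>c\<in>configs n k m. \<pi> c * (\<lambda>_. 1) (proj n k j c))"
    using st unfolding stationary_def by simp
  also have "\<dots> = (\<Sum>\<eta>\<in>?Z. nu n k m j \<pi> \<eta> * 1)" by (rule sum_nu[OF j(1)])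
  also have "\<dots> = H * (\<Sum>\<eta>\<in>?Z. wt n x t \<eta>)" using H by (simp add: sum_distrib_left)
  finally have H1: "H * (\<Sum>\<eta>\<in>?Z. wt n x t \<eta>) = 1" by simp
  have E1: "(\<Sum>c\<in>configs n k m. \<pi> c * real (proj n k j c 1)) = (\<Sum>\<eta>\<in>?Z. nu n k m j \<pi> \<eta> * real (\<eta> 1))"
    using sum_nu[OF j(1), of \<pi> "\<lambda>\<eta>. real (\<eta> 1)"] by simp
  have E2: "(\<Sum>\<eta>\<in>?Z. nu n k m j \<pi> \<eta> * real (\<eta> 1)) = (\<Sum>\<eta>\<in>?Z. H * (real (\<eta> 1) * wt n x t \<eta>))"
    by (rule sum.cong) (simp_all add: H)
  have E: "(\<Sum>c\<in>configs n k m. \<pi> c * real (proj n k j c 1)) = H * (\<Sum>\<eta>\<in>?Z. real (\<eta> 1) * wt n x t \<eta>)"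
    unfolding E1 E2 by (simp add: sum_distrib_left)
  have "(\<Sum>\<eta>\<in>?Z. wt n x t \<eta>) > 0"
    by (rule sum_pos) (use ee_in[OF n] comp_finite wt_pos[OF x t] in blast)+
  then have "H = 1 / (\<Sum>\<eta>\<in>?Z. wt n x t \<eta>)" using H1 by (metis less_irrefl nonzero_eq_divide_eq)
  then show ?thesis using E by simp
qed




lemma prod_split1:
  fixes n :: nat
  assumes n: "n \<ge> 1"
  shows "(\<Prod>i=1..n. f i) = f 1 * (\<Prod>i\<in>{2..n}. f i)"
proof -
  have "{1..n} = insert 1 {2..n}" using n by auto
  then show ?thesis by simp
qed

lemma qm_wt: "qmultinom n N \<eta> t * (\<Prod>i=1..n. x i ^ \<eta> i) = qfact N t * wt n x t \<eta>"
  unfolding qmultinom_def wt_def by (simp add: prod_dividef)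

lemma Hderiv:
  assumes n: "n \<ge> 1"
  shows "\<exists>D. ((\<lambda>y. Htilde n N (x(1 := y)) t) has_real_derivative D) (at (x 1)) \<and>
     x 1 * D = qfact N t * (\<Sum>\<eta>\<in>compositions n N. real (\<eta> 1) * wt n x t \<eta>)"
proof -
  let ?Z = "compositions n N"
  define K where "K \<eta> = qmultinom n N \<eta> t * (\<Prod>i\<in>{2..n}. x i ^ \<eta> i)" for \<eta>
  have feq: "(\<lambda>y. Htilde n N (x(1 := y)) t) = (\<lambda>y. \<Sum>\<eta>\<in>?Z. K \<eta> * y ^ \<eta> 1)"
  proof
    fix y
    show "Htilde n N (x(1 := y)) t = (\<Sum>\<eta>\<in>?Z. K \<eta> * y ^ \<eta> 1)"
      unfolding Htilde_def
    proof (rule sum.cong[OF refl])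
      fix \<eta>
      have "(\<Prod>i=1..n. (x(1 := y)) i ^ \<eta> i) = y ^ \<eta> 1 * (\<Prod>i\<in>{2..n}. (x(1 := y)) i ^ \<eta> i)"
        by (subst prod_split1[OF n]) simp
      also have "(\<Prod>i\<in>{2..n}. (x(1 := y)) i ^ \<eta> i) = (\<Prod>i\<in>{2..n}. x i ^ \<eta> i)"
        by (rule prod.cong) auto
      finally show "qmultinom n N \<eta> t * (\<Prod>i=1..n. (x(1 := y)) i ^ \<eta> i) = K \<eta> * y ^ \<eta> 1"
        unfolding K_def by simp
    qed
  qed
  define D where "D = (\<Sum>\<eta>\<in>?Z. K \<eta> * (real (\<eta> 1) * x 1 ^ (\<eta> 1 - Suc 0)))"
  have "((\<lambda>y. \<Sum>\<eta>\<in>?Z. K \<eta> * y ^ \<eta> 1) has_real_derivative D) (at (x 1))"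
    unfolding D_def by (intro DERIV_sum DERIV_cmult DERIV_pow)
  moreover have "x 1 * D = qfact N t * (\<Sum>\<eta>\<in>?Z. real (\<eta> 1) * wt n x t \<eta>)"
  proof -
    have "x 1 * D = (\<Sum>\<eta>\<in>?Z. real (\<eta> 1) * (K \<eta> * x 1 ^ \<eta> 1))"
      unfolding D_def sum_distrib_left
    proof (rule sum.cong[OF refl])
      fix \<eta> :: "nat \<Rightarrow> nat"
      show "x 1 * (K \<eta> * (real (\<eta> 1) * x 1 ^ (\<eta> 1 - Suc 0))) = real (\<eta> 1) * (K \<eta> * x 1 ^ \<eta> 1)"
        by (cases "\<eta> 1") (simp_all add: mult_ac)
    qed
    also have "\<dots> = (\<Sum>\<eta>\<in>?Z. real (\<eta> 1) * (qfact N t * wt n x t \<eta>))"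
    proof (rule sum.cong[OF refl])
      fix \<eta> :: "nat \<Rightarrow> nat"
      have "K \<eta> * x 1 ^ \<eta> 1 = qmultinom n N \<eta> t * (\<Prod>i=1..n. x i ^ \<eta> i)"
        unfolding K_def prod_split1[OF n] by (simp add: mult_ac)
      then show "real (\<eta> 1) * (K \<eta> * x 1 ^ \<eta> 1) = real (\<eta> 1) * (qfact N t * wt n x t \<eta>)"
        unfolding qm_wt by simp
    qed
    finally show ?thesis by (simp add: sum_distrib_left mult_ac)
  qed
  ultimately show ?thesis unfolding feq by blast
qed

lemma Hval: "Htilde n N x t = qfact N t * (\<Sum>\<eta>\<in>compositions n N. wt n x t \<eta>)"
  unfolding Htilde_def qm_wt by (simp add: sum_distrib_left)




theorem theorem7:
  fixes n k :: nat and m :: "nat \<Rightarrow> nat" and x :: "nat \<Rightarrow> real" and t :: real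
    and \<pi> :: "(nat \<times> nat \<Rightarrow> nat) \<Rightarrow> real" and j :: nat
  defines "M \<equiv> (\<lambda>i. \<Sum>l=i..k. m l)"
  assumes "\<forall>i\<in>{1..k}. m i > 0"
    and "n \<ge> 1"
    and "\<forall>i\<in>{1..n}. x i > 0"
    and "t > 0"
    and "stationary n k m x t \<pi>"
    and "j \<in> {1..k}"
  shows "(\<Sum>c\<in>configs n k m. \<pi> c * real (c (1, j)))
       = x 1 * deriv (\<lambda>y. ln (Htilde n (M j) (x(1 := y)) t / Htilde n (M (j + 1)) (x(1 := y)) t)) (x 1)"
proof -
  note n = assms(3) and xp = assms(4) and tp = assms(5) and st = assms(6) and jk = assms(7)
  let ?ZA = "compositions n (M j)"
  let ?ZB = "compositions n (M (j + 1))"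
  let ?SA = "\<Sum>\<eta>\<in>?ZA. wt n x t \<eta>"
  let ?SB = "\<Sum>\<eta>\<in>?ZB. wt n x t \<eta>"
  let ?EA = "\<Sum>\<eta>\<in>?ZA. real (\<eta> 1) * wt n x t \<eta>"
  let ?EB = "\<Sum>\<eta>\<in>?ZB. real (\<eta> 1) * wt n x t \<eta>"
  let ?qA = "qfact (M j) t"
  let ?qB = "qfact (M (j + 1)) t"
  have SA: "?SA > 0" by (rule sum_pos) (use ee_in[OF n] comp_finite wt_pos[OF xp tp] in blast)+
  have SB: "?SB > 0" by (rule sum_pos) (use ee_in[OF n] comp_finite wt_pos[OF xp tp] in blast)+
  have qA: "?qA > 0" and qB: "?qB > 0" using qfact_pos[OF tp] by auto
  obtain DA where dA: "((\<lambda>y. Htilde n (M j) (x(1 := y)) t) has_real_derivative DA) (at (x 1))"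
    and eA: "x 1 * DA = ?qA * ?EA" using Hderiv[OF n] by blast
  obtain DB where dB: "((\<lambda>y. Htilde n (M (j + 1)) (x(1 := y)) t) has_real_derivative DB) (at (x 1))"
    and eB: "x 1 * DB = ?qB * ?EB" using Hderiv[OF n] by blast
  have vA: "Htilde n (M j) (x(1 := x 1)) t = ?qA * ?SA" using Hval by simp
  have vB: "Htilde n (M (j + 1)) (x(1 := x 1)) t = ?qB * ?SB" using Hval by simp
  have pA: "?qA * ?SA > 0" and pB: "?qB * ?SB > 0" using SA SB qA qB by auto
  have "((\<lambda>y. ln (Htilde n (M j) (x(1 := y)) t / Htilde n (M (j + 1)) (x(1 := y)) t)) has_real_derivative
      (1 / (Htilde n (M j) (x(1 := x 1)) t / Htilde n (M (j + 1)) (x(1 := x 1)) t)) *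
      ((DA * Htilde n (M (j + 1)) (x(1 := x 1)) t - Htilde n (M j) (x(1 := x 1)) t * DB) /
       (Htilde n (M (j + 1)) (x(1 := x 1)) t * Htilde n (M (j + 1)) (x(1 := x 1)) t))) (at (x 1))"
    by (rule DERIV_chain2[OF DERIV_ln_divide DERIV_divide[OF dA dB]]) (use vA vB pA pB SA SB qA qB in simp_all)
  then have der: "deriv (\<lambda>y. ln (Htilde n (M j) (x(1 := y)) t / Htilde n (M (j + 1)) (x(1 := y)) t)) (x 1)
     = (1 / (?qA * ?SA / (?qB * ?SB))) * ((DA * (?qB * ?SB) - ?qA * ?SA * DB) / (?qB * ?SB * (?qB * ?SB)))"
    unfolding vA vB by (rule DERIV_imp_deriv)
  have rhs: "x 1 * deriv (\<lambda>y. ln (Htilde n (M j) (x(1 := y)) t / Htilde n (M (j + 1)) (x(1 := y)) t)) (x 1)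
      = ?EA / ?SA - ?EB / ?SB"
  proof -
    have "x 1 * deriv (\<lambda>y. ln (Htilde n (M j) (x(1 := y)) t / Htilde n (M (j + 1)) (x(1 := y)) t)) (x 1)
       = (x 1 * DA) / (?qA * ?SA) - (x 1 * DB) / (?qB * ?SB)"
      unfolding der using SA SB qA qB by (simp add: field_simps)
    also have "\<dots> = ?EA / ?SA - ?EB / ?SB" unfolding eA eB using qA qB by simp
    finally show ?thesis .
  qed
  have j1: "1 \<le> j" "j \<le> k + 1" and j2: "1 \<le> j + 1" "j + 1 \<le> k + 1" using jk by auto
  have LA: "(\<Sum>c\<in>configs n k m. \<pi> c * real (proj n k j c 1)) = ?EA / ?SA"
    unfolding M_def by (rule expectation[OF st j1 n xp tp])
  have LB: "(\<Sum>c\<in>configs n k m. \<pi> c * real (proj n k (j + 1) c 1)) = ?EB / ?SB"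
    unfolding M_def by (rule expectation[OF st j2 n xp tp])
  have pc: "real (c (1, j)) = real (proj n k j c 1) - real (proj n k (j + 1) c 1)" for c
  proof -
    have "proj n k j c 1 = c (1, j) + proj n k (j + 1) c 1"
      using n jk by (simp add: proj_def sum.atLeast_Suc_atMost)
    then show ?thesis by simp
  qed
  have "(\<Sum>c\<in>configs n k m. \<pi> c * real (c (1, j))) =
     (\<Sum>c\<in>configs n k m. \<pi> c * real (proj n k j c 1)) - (\<Sum>c\<in>configs n k m. \<pi> c * real (proj n k (j + 1) c 1))"
    unfolding pc by (simp add: right_diff_distrib sum_subtractf)
  then show ?thesis unfolding LA LB rhs .
qed


end
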